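(* Let $\{f_j^\lambda\}$ be a parametrized IFS satisfying (MA1)–(MA4) and (MT) (with constant $\eta$) on $U\subset\mathbb R^d$. Then for every $\lambda_0\in U$ there exists an open ball $B(\lambda_0,\varepsilon_0)\subset U$ such that for every $\omega,\tau\in\Sigma$ with $\omega_1\ne\tau_1$ there is a unit vector $e\in\mathbb R^d$ such that for every $p\in B(0,\varepsilon_0)\cap\mathrm{span}(e)^\perp$ and every $t\in J_p=\{t\in\mathbb R:p+te\in B(0,\varepsilon_0)\}$, $$|\Pi^{\lambda_0+p+te}(\omega)-\Pi^{\lambda_0+p+te}(\tau)|<\eta/2\implies\Big|\tfrac{d}{dt}\big(\Pi^{\lambda_0+p+te}(\omega)-\Pi^{\lambda_0+p+te}(\tau)\big)\Big|\ge\eta/2.$$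
   Context: Setup: $X\subset\mathbb R$ compact interval, $\mathcal A=\{1,\dots,m\}$, $\Sigma=\mathcal A^{\mathbb N}$, $\omega_1$ the first symbol of $\omega$, $f^\lambda_\omega$ compositions, $\Pi^\lambda(\mathbf i)=\lim_nf^\lambda_{\mathbf i|_n}(x)$. $U\subset\mathbb R^d$ bounded open. (MA1)–(MA4), $\delta\in(0,1)$: $f^\lambda_j$ is $C^{2+\delta}$ in $x$, $C^{1+\delta}$ in $\lambda$, with continuous mixed partials $\partial^2 f/\partial x\partial\lambda_i$, these derivatives uniformly bounded and uniformly $\delta$-Hölder in $x$ and $\lambda$; $0<\gamma_1\le|\frac d{dx}f^\lambda_j|\le\gamma_2<1$. (MT): there is $\eta>0$ such that for all $\lambda\in\overline U$ and $\mathbf i,\mathbf j$ with $i_1\ne j_1$, $|\Pi^\lambda(\mathbf i)-\Pi^\lambda(\mathbf j)|<\eta\Rightarrow|\nabla_\lambda(\Pi^\lambda(\mathbf i)-\Pi^\lambda(\mathbf j))|\ge\eta$. *)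

theory Defs
  imports "HOL-Analysis.Analysis"
begin

text \<open>Parameters lambda live in real^'d. Maps: f lambda j x, symbols j in {1..m}.
  Sigma = sequences nat => nat with values in {1..m}; omega 0 is the first symbol.\<close>

definition symseq :: "nat \<Rightarrow> (nat \<Rightarrow> nat) set" where
  "symseq m = {\<omega>. \<forall>k. \<omega> k \<in> {1..m}}"

fun fcomp :: "('p \<Rightarrow> nat \<Rightarrow> real \<Rightarrow> real) \<Rightarrow> 'p \<Rightarrow> (nat \<Rightarrow> nat) \<Rightarrow> nat \<Rightarrow> real \<Rightarrow> real" where
  "fcomp f l \<omega> 0 = id"
| "fcomp f l \<omega> (Suc n) = fcomp f l \<omega> n \<circ> f l (\<omega> n)"

definition proj :: "('p \<Rightarrow> nat \<Rightarrow> real \<Rightarrow> real) \<Rightarrow> real \<Rightarrow> 'p \<Rightarrow> (nat \<Rightarrow> nat) \<Rightarrow> real" where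
  "proj f x l \<omega> = lim (\<lambda>n. fcomp f l \<omega> n x)"

definition holder_xl ::
  "real set \<Rightarrow> (real^'d) set \<Rightarrow> real \<Rightarrow> (real^'d \<Rightarrow> real \<Rightarrow> 'b::real_normed_vector) \<Rightarrow> bool" where
  "holder_xl X U \<delta> D \<longleftrightarrow> (\<exists>C. \<forall>l\<in>U. \<forall>l'\<in>U. \<forall>x\<in>X. \<forall>x'\<in>X.
      norm (D l x - D l' x') \<le> C * (norm (l - l') powr \<delta> + \<bar>x - x'\<bar> powr \<delta>))"

definition MA :: "real set \<Rightarrow> (real^'d) set \<Rightarrow> nat \<Rightarrow> real \<Rightarrow>
    (real^'d \<Rightarrow> nat \<Rightarrow> real \<Rightarrow> real) \<Rightarrow> bool" where
  "MA X U m \<delta> f \<longleftrightarrow> 0 < \<delta> \<and> \<delta> < 1 \<and>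
    (\<forall>j\<in>{1..m}. \<forall>l\<in>U. f l j ` X \<subseteq> X) \<and>
    (\<exists>Dx Dxx Dl Dxl \<gamma>1 \<gamma>2 C.
       0 < \<gamma>1 \<and> \<gamma>1 \<le> \<gamma>2 \<and> \<gamma>2 < 1 \<and>
       (\<forall>j\<in>{1..m}. \<forall>l\<in>U. \<forall>x\<in>X.
          ((\<lambda>y. f l j y) has_real_derivative Dx l j x) (at x within X) \<and>
          ((\<lambda>y. Dx l j y) has_real_derivative Dxx l j x) (at x within X) \<and>
          ((\<lambda>l'. f l' j x) has_derivative (\<lambda>h. Dl l j x \<bullet> h)) (at l) \<and>
          ((\<lambda>l'. Dx l' j x) has_derivative (\<lambda>h. Dxl l j x \<bullet> h)) (at l) \<and>
          \<gamma>1 \<le> \<bar>Dx l j x\<bar> \<and> \<bar>Dx l j x\<bar> \<le> \<gamma>2 \<and>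
          \<bar>Dxx l j x\<bar> \<le> C \<and> norm (Dl l j x) \<le> C \<and> norm (Dxl l j x) \<le> C) \<and>
       (\<forall>j\<in>{1..m}.
          holder_xl X U \<delta> (\<lambda>l x. Dx l j x) \<and>
          holder_xl X U \<delta> (\<lambda>l x. Dxx l j x) \<and>
          holder_xl X U \<delta> (\<lambda>l x. Dl l j x) \<and>
          holder_xl X U \<delta> (\<lambda>l x. Dxl l j x)))"

definition MT :: "real set \<Rightarrow> (real^'d) set \<Rightarrow> nat \<Rightarrow>
    (real^'d \<Rightarrow> nat \<Rightarrow> real \<Rightarrow> real) \<Rightarrow> real \<Rightarrow> bool" where
  "MT X U m f \<eta> \<longleftrightarrow> 0 < \<eta> \<and>
    (\<forall>l\<in>closure U. \<forall>\<omega>\<in>symseq m. \<forall>\<tau>\<in>symseq m. \<forall>x\<in>X. \<omega> 0 \<noteq> \<tau> 0 \<longrightarrow>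
       \<bar>proj f x l \<omega> - proj f x l \<tau>\<bar> < \<eta> \<longrightarrow>
       (\<forall>G. ((\<lambda>l'. proj f x l' \<omega> - proj f x l' \<tau>) has_derivative (\<lambda>h. G \<bullet> h)) (at l)
            \<longrightarrow> \<eta> \<le> norm G))"

end

theory Submission
  imports Defs
begin


lemma sup_trick:
  fixes E :: "'a \<Rightarrow> real"
  assumes cl: "\<forall>w\<in>S. s w \<in> S" and bd: "\<forall>w\<in>S. E w \<le> B"
    and rec: "\<forall>w\<in>S. E w \<le> R + q * E (s w)" and q: "0 \<le> q" "q < 1"
  shows "\<forall>w\<in>S. E w \<le> R / (1 - q)"
proof (cases "S = {}")
  case True then show ?thesis by simp
next
  case False
  define M where "M = (SUP w\<in>S. E w)"
  have bdd: "bdd_above (E ` S)" using bd by (auto intro: bdd_aboveI2)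
  have up: "E w \<le> M" if "w \<in> S" for w unfolding M_def using cSUP_upper[OF that bdd] .
  have "M \<le> R + q * M" unfolding M_def
  proof (rule cSUP_least[OF False])
    fix w assume w: "w \<in> S"
    have "E (s w) \<le> M" using up cl w by blast
    then have "q * E (s w) \<le> q * M" using q by (simp add: mult_left_mono)
    then show "E w \<le> R + q * (SUP w\<in>S. E w)" using rec w unfolding M_def by force
  qed
  then have "M * (1 - q) \<le> R" by (simp add: algebra_simps)
  then have "M \<le> R / (1 - q)" using q by (simp add: pos_le_divide_eq)
  then show ?thesis using up by force
qed

lemma holder_uniform:
  fixes D :: "nat \<Rightarrow> real^'d \<Rightarrow> real \<Rightarrow> 'b::real_normed_vector"
  assumes "finite J" "\<forall>j\<in>J. holder_xl X U \<delta> (D j)"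
  shows "\<exists>C. \<forall>j\<in>J. \<forall>l\<in>U. \<forall>l'\<in>U. \<forall>y\<in>X. \<forall>y'\<in>X.
      norm (D j l y - D j l' y') \<le> C * (norm (l - l') powr \<delta> + \<bar>y - y'\<bar> powr \<delta>)"
proof -
  from assms(2) have "\<forall>j\<in>J. \<exists>C. \<forall>l\<in>U. \<forall>l'\<in>U. \<forall>y\<in>X. \<forall>y'\<in>X.
      norm (D j l y - D j l' y') \<le> C * (norm (l - l') powr \<delta> + \<bar>y - y'\<bar> powr \<delta>)"
    unfolding holder_xl_def by blast
  then obtain Cf where Cf: "\<forall>j\<in>J. \<forall>l\<in>U. \<forall>l'\<in>U. \<forall>y\<in>X. \<forall>y'\<in>X.
      norm (D j l y - D j l' y') \<le> Cf j * (norm (l - l') powr \<delta> + \<bar>y - y'\<bar> powr \<delta>)"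
    by metis
  show ?thesis
  proof (intro exI ballI)
    fix j l l' y y' assume j: "j \<in> J" and l: "l \<in> U" "l' \<in> U" and y: "y \<in> X" "y' \<in> X"
    have "Cf j \<le> (\<Sum>i\<in>J. \<bar>Cf i\<bar>)"
      using member_le_sum[of j J "\<lambda>i. \<bar>Cf i\<bar>"] j assms(1) by force
    moreover have "0 \<le> norm (l - l') powr \<delta> + \<bar>y - y'\<bar> powr \<delta>" by simp
    ultimately have "Cf j * (norm (l - l') powr \<delta> + \<bar>y - y'\<bar> powr \<delta>)
       \<le> (\<Sum>i\<in>J. \<bar>Cf i\<bar>) * (norm (l - l') powr \<delta> + \<bar>y - y'\<bar> powr \<delta>)"
      by (rule mult_right_mono)
    then show "norm (D j l y - D j l' y') \<le> (\<Sum>i\<in>J. \<bar>Cf i\<bar>) * (norm (l - l') powr \<delta> + \<bar>y - y'\<bar> powr \<delta>)"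
      using Cf j l y by force
  qed
qed

lemma holder_uc:
  fixes D :: "nat \<Rightarrow> real^'d \<Rightarrow> real \<Rightarrow> 'b::real_normed_vector"
  assumes "finite J" "\<forall>j\<in>J. holder_xl X U \<delta> (D j)" "0 < \<delta>"
  shows "\<forall>\<epsilon>>0. \<exists>r>0. \<forall>j\<in>J. \<forall>l\<in>U. \<forall>l'\<in>U. \<forall>y\<in>X. \<forall>y'\<in>X.
      norm (l - l') < r \<longrightarrow> \<bar>y - y'\<bar> < r \<longrightarrow> norm (D j l y - D j l' y') \<le> \<epsilon>"
proof (intro allI impI)
  fix \<epsilon> :: real assume e: "\<epsilon> > 0"
  obtain C where C: "\<forall>j\<in>J. \<forall>l\<in>U. \<forall>l'\<in>U. \<forall>y\<in>X. \<forall>y'\<in>X.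
      norm (D j l y - D j l' y') \<le> C * (norm (l - l') powr \<delta> + \<bar>y - y'\<bar> powr \<delta>)"
    using holder_uniform[OF assms(1,2)] by blast
  define K where "K = \<epsilon> / (2 * \<bar>C\<bar> + 1)"
  have K: "K > 0" using e by (simp add: K_def)
  define r where "r = K powr (1 / \<delta>)"
  have r: "r > 0" using K by (simp add: r_def)
  have rd: "r powr \<delta> = K" using K assms(3) by (simp add: r_def powr_powr)
  show "\<exists>r>0. \<forall>j\<in>J. \<forall>l\<in>U. \<forall>l'\<in>U. \<forall>y\<in>X. \<forall>y'\<in>X.
      norm (l - l') < r \<longrightarrow> \<bar>y - y'\<bar> < r \<longrightarrow> norm (D j l y - D j l' y') \<le> \<epsilon>"
  proof (intro exI[of _ r] conjI r ballI impI)
    fix j l l' y y' assume j: "j \<in> J" and l: "l \<in> U" "l' \<in> U" and y: "y \<in> X" "y' \<in> X"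
      and n1: "norm (l - l') < r" and n2: "\<bar>y - y'\<bar> < r"
    have p1: "norm (l - l') powr \<delta> \<le> K" using n1 rd assms(3)
      by (metis less_imp_le norm_ge_zero powr_mono2)
    have p2: "\<bar>y - y'\<bar> powr \<delta> \<le> K" using n2 rd assms(3)
      by (metis less_imp_le abs_ge_zero powr_mono2)
    have "norm (D j l y - D j l' y') \<le> C * (norm (l - l') powr \<delta> + \<bar>y - y'\<bar> powr \<delta>)"
      using C j l y by blast
    also have "\<dots> \<le> \<bar>C\<bar> * (norm (l - l') powr \<delta> + \<bar>y - y'\<bar> powr \<delta>)"
      by (intro mult_right_mono) auto
    also have "\<dots> \<le> \<bar>C\<bar> * (2 * K)" using p1 p2 by (intro mult_left_mono) auto
    also have "\<dots> \<le> \<epsilon>" using e unfolding K_def by (simp add: field_simps)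
    finally show "norm (D j l y - D j l' y') \<le> \<epsilon>" .
  qed
qed

lemma fcomp_Suc_shift:
  "fcomp f l \<omega> (Suc n) = f l (\<omega> 0) \<circ> fcomp f l (\<lambda>i. \<omega> (i + 1)) n"
proof (induction n)
  case 0 then show ?case by simp
next
  case (Suc n)
  have "fcomp f l \<omega> (Suc (Suc n)) = fcomp f l \<omega> (Suc n) \<circ> f l (\<omega> (Suc n))" by simp
  also have "\<dots> = (f l (\<omega> 0) \<circ> fcomp f l (\<lambda>i. \<omega> (i + 1)) n) \<circ> f l ((\<lambda>i. \<omega> (i + 1)) n)"
    by (subst Suc.IH) simp
  also have "\<dots> = f l (\<omega> 0) \<circ> fcomp f l (\<lambda>i. \<omega> (i + 1)) (Suc n)" by (simp add: o_assoc)
  finally show ?case .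
qed




locale ifs =
  fixes f :: "real^'d \<Rightarrow> nat \<Rightarrow> real \<Rightarrow> real"
    and Dx :: "real^'d \<Rightarrow> nat \<Rightarrow> real \<Rightarrow> real"
    and Dl :: "real^'d \<Rightarrow> nat \<Rightarrow> real \<Rightarrow> real^'d"
    and U :: "(real^'d) set" and a b g2 Cb x :: real and m :: nat
  assumes ab: "a \<le> b" and xX: "x \<in> {a..b}" and openU: "open U"
    and maps: "\<And>j l y. j \<in> {1..m} \<Longrightarrow> l \<in> U \<Longrightarrow> y \<in> {a..b} \<Longrightarrow> f l j y \<in> {a..b}"
    and dx: "\<And>j l y. j \<in> {1..m} \<Longrightarrow> l \<in> U \<Longrightarrow> y \<in> {a..b} \<Longrightarrow>
        ((\<lambda>z. f l j z) has_real_derivative Dx l j y) (at y within {a..b})"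
    and dl: "\<And>j l y. j \<in> {1..m} \<Longrightarrow> l \<in> U \<Longrightarrow> y \<in> {a..b} \<Longrightarrow>
        ((\<lambda>l'. f l' j y) has_derivative (\<lambda>h. Dl l j y \<bullet> h)) (at l)"
    and g2: "0 \<le> g2" "g2 < 1" and Cb: "0 \<le> Cb"
    and bDx: "\<And>j l y. j \<in> {1..m} \<Longrightarrow> l \<in> U \<Longrightarrow> y \<in> {a..b} \<Longrightarrow> \<bar>Dx l j y\<bar> \<le> g2"
    and bDl: "\<And>j l y. j \<in> {1..m} \<Longrightarrow> l \<in> U \<Longrightarrow> y \<in> {a..b} \<Longrightarrow> norm (Dl l j y) \<le> Cb"
    and ucDx: "\<forall>\<epsilon>>0. \<exists>r>0. \<forall>j\<in>{1..m}. \<forall>l\<in>U. \<forall>l'\<in>U. \<forall>y\<in>{a..b}. \<forall>y'\<in>{a..b}.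
      norm (l - l') < r \<longrightarrow> \<bar>y - y'\<bar> < r \<longrightarrow> norm (Dx l j y - Dx l' j y') \<le> \<epsilon>"
    and ucDl: "\<forall>\<epsilon>>0. \<exists>r>0. \<forall>j\<in>{1..m}. \<forall>l\<in>U. \<forall>l'\<in>U. \<forall>y\<in>{a..b}. \<forall>y'\<in>{a..b}.
      norm (l - l') < r \<longrightarrow> \<bar>y - y'\<bar> < r \<longrightarrow> norm (Dl l j y - Dl l' j y') \<le> \<epsilon>"
begin

definition sh :: "nat \<Rightarrow> (nat \<Rightarrow> nat) \<Rightarrow> (nat \<Rightarrow> nat)" where
  "sh k \<omega> = (\<lambda>i. \<omega> (i + k))"

lemma sh_sym: "\<omega> \<in> symseq m \<Longrightarrow> sh k \<omega> \<in> symseq m"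
  by (simp add: symseq_def sh_def)

lemma sym0: "\<omega> \<in> symseq m \<Longrightarrow> \<omega> k \<in> {1..m}"
  by (simp add: symseq_def)

lemma sh_sh: "sh k (sh 1 \<omega>) = sh (Suc k) \<omega>"
  by (simp add: sh_def add.commute add.left_commute)

lemma sh_app: "sh 1 \<omega> k = \<omega> (Suc k)" by (simp add: sh_def)

lemma f_lip_y:
  assumes "j \<in> {1..m}" "l \<in> U" "y \<in> {a..b}" "y' \<in> {a..b}"
  shows "\<bar>f l j y - f l j y'\<bar> \<le> g2 * \<bar>y - y'\<bar>"
proof -
  have "norm (f l j y - f l j y') \<le> g2 * norm (y - y')"
  proof (rule field_differentiable_bound[of "{a..b}" "f l j" "Dx l j" g2 y y'])
    show "convex {a..b}" by (rule convex_real_interval)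
    fix z assume z: "z \<in> {a..b}"
    show "(f l j has_field_derivative Dx l j z) (at z within {a..b})"
      using dx[OF assms(1,2) z] by simp
    show "norm (Dx l j z) \<le> g2" using bDx[OF assms(1,2) z] by simp
  qed (use assms in auto)
  then show ?thesis by simp
qed

lemma fcomp_props:
  assumes l: "l \<in> U" and w: "\<omega> \<in> symseq m"
  shows "\<forall>y\<in>{a..b}. fcomp f l \<omega> n y \<in> {a..b} \<and>
     (\<forall>y'\<in>{a..b}. \<bar>fcomp f l \<omega> n y - fcomp f l \<omega> n y'\<bar> \<le> g2 ^ n * \<bar>y - y'\<bar>)"
proof (induction n)
  case 0 then show ?case by simp
next
  case (Suc n)
  show ?case
  proof (intro ballI conjI)
    fix y assume y: "y \<in> {a..b}"
    have fy: "f l (\<omega> n) y \<in> {a..b}" using maps[OF sym0[OF w] l y] .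
    then show "fcomp f l \<omega> (Suc n) y \<in> {a..b}" using Suc by simp
    fix y' assume y': "y' \<in> {a..b}"
    have fy': "f l (\<omega> n) y' \<in> {a..b}" using maps[OF sym0[OF w] l y'] .
    have "\<bar>fcomp f l \<omega> (Suc n) y - fcomp f l \<omega> (Suc n) y'\<bar>
        = \<bar>fcomp f l \<omega> n (f l (\<omega> n) y) - fcomp f l \<omega> n (f l (\<omega> n) y')\<bar>" by simp
    also have "\<dots> \<le> g2 ^ n * \<bar>f l (\<omega> n) y - f l (\<omega> n) y'\<bar>" using Suc fy fy' by blast
    also have "\<dots> \<le> g2 ^ n * (g2 * \<bar>y - y'\<bar>)"
      using f_lip_y[OF sym0[OF w] l y y'] g2 by (intro mult_left_mono) auto
    finally show "\<bar>fcomp f l \<omega> (Suc n) y - fcomp f l \<omega> (Suc n) y'\<bar> \<le> g2 ^ Suc n * \<bar>y - y'\<bar>"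
      by (simp add: ac_simps)
  qed
qed

abbreviation P where "P l \<omega> \<equiv> proj f x l \<omega>"

lemma proj_lim:
  assumes l: "l \<in> U" and w: "\<omega> \<in> symseq m"
  shows "(\<lambda>n. fcomp f l \<omega> n x) \<longlonglongrightarrow> P l \<omega>"
proof -
  define X where "X n = fcomp f l \<omega> n x" for n
  have step: "norm (X (Suc n) - X n) \<le> (b - a) * g2 ^ n" for n
  proof -
    have fx: "f l (\<omega> n) x \<in> {a..b}" using maps[OF sym0[OF w] l xX] .
    have "\<bar>X (Suc n) - X n\<bar> = \<bar>fcomp f l \<omega> n (f l (\<omega> n) x) - fcomp f l \<omega> n x\<bar>"
      by (simp add: X_def)
    also have "\<dots> \<le> g2 ^ n * \<bar>f l (\<omega> n) x - x\<bar>" using fcomp_props[OF l w] fx xX by blast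
    also have "\<dots> \<le> g2 ^ n * (b - a)" using fx xX g2 by (intro mult_left_mono) auto
    finally show ?thesis by (simp add: mult.commute)
  qed
  have sg: "summable (\<lambda>n. (b - a) * g2 ^ n)" using g2 by (intro summable_mult summable_geometric) auto
  have s: "summable (\<lambda>n. X (Suc n) - X n)" by (rule summable_comparison_test'[OF sg step])
  have "(\<lambda>n. \<Sum>i<n. X (Suc i) - X i) \<longlonglongrightarrow> (\<Sum>i. X (Suc i) - X i)"
    using summable_LIMSEQ[OF s] .
  then have "(\<lambda>n. X n - X 0) \<longlonglongrightarrow> (\<Sum>i. X (Suc i) - X i)" by (simp add: sum_lessThan_telescope)
  then have "(\<lambda>n. X n - X 0 + X 0) \<longlonglongrightarrow> (\<Sum>i. X (Suc i) - X i) + X 0" by (intro tendsto_intros)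
  then have "convergent X" unfolding convergent_def by auto
  then show ?thesis unfolding proj_def X_def[symmetric] by (simp add: convergent_LIMSEQ_iff)
qed

lemma proj_X:
  assumes l: "l \<in> U" and w: "\<omega> \<in> symseq m"
  shows "P l \<omega> \<in> {a..b}"
proof -
  have inX: "fcomp f l \<omega> n x \<in> {a..b}" for n using fcomp_props[OF l w] xX by blast
  have "a \<le> P l \<omega>" using LIMSEQ_le_const[OF proj_lim[OF l w]] inX by auto
  moreover have "P l \<omega> \<le> b" using LIMSEQ_le_const2[OF proj_lim[OF l w]] inX by auto
  ultimately show ?thesis by simp
qed

lemma proj_rec:
  assumes l: "l \<in> U" and w: "\<omega> \<in> symseq m"
  shows "P l \<omega> = f l (\<omega> 0) (P l (sh 1 \<omega>))"
proof -
  have w1: "sh 1 \<omega> \<in> symseq m" by (rule sh_sym[OF w])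
  have "(\<lambda>n. fcomp f l \<omega> (Suc n) x) \<longlonglongrightarrow> P l \<omega>"
    using LIMSEQ_Suc[OF proj_lim[OF l w]] .
  moreover have "(\<lambda>n. fcomp f l \<omega> (Suc n) x) = (\<lambda>n. f l (\<omega> 0) (fcomp f l (sh 1 \<omega>) n x))"
    by (rule ext) (simp only: fcomp_Suc_shift sh_def o_apply)
  moreover have "(\<lambda>n. f l (\<omega> 0) (fcomp f l (sh 1 \<omega>) n x)) \<longlonglongrightarrow> f l (\<omega> 0) (P l (sh 1 \<omega>))"
  proof -
    have c: "continuous_on {a..b} (f l (\<omega> 0))"
      using dx[OF sym0[OF w] l] by (intro DERIV_continuous_on) auto
    show ?thesis
      using continuous_on_tendsto_compose[OF c proj_lim[OF l w1] proj_X[OF l w1]]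
        fcomp_props[OF l w1] xX by (simp add: o_def)
  qed
  ultimately show ?thesis using LIMSEQ_unique by metis
qed

lemma onorm_inner_le:
  fixes v :: "real^'d"
  assumes "norm v \<le> K"
  shows "onorm (\<lambda>h. v \<bullet> h) \<le> K"
proof (rule onorm_le)
  fix h :: "real^'d"
  have "\<bar>v \<bullet> h\<bar> \<le> norm v * norm h" by (rule Cauchy_Schwarz_ineq2)
  also have "\<dots> \<le> K * norm h" using assms by (intro mult_right_mono) auto
  finally show "norm (v \<bullet> h) \<le> K * norm h" by simp
qed

lemma f_lip_l:
  assumes V: "ball c r \<subseteq> U" and l: "l \<in> ball c r" "l' \<in> ball c r"
    and j: "j \<in> {1..m}" and y: "y \<in> {a..b}"
  shows "\<bar>f l j y - f l' j y\<bar> \<le> Cb * norm (l - l')"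
proof -
  have "norm ((\<lambda>l. f l j y) l - (\<lambda>l. f l j y) l') \<le> Cb * norm (l - l')"
  proof (rule differentiable_bound[OF convex_ball])
    fix z assume z: "z \<in> ball c r"
    have zU: "z \<in> U" using z V by blast
    show "((\<lambda>l. f l j y) has_derivative (\<lambda>h. Dl z j y \<bullet> h)) (at z within ball c r)"
      using has_derivative_at_withinI[OF dl[OF j zU y]] .
    show "onorm (\<lambda>h. Dl z j y \<bullet> h) \<le> Cb"
      using bDl[OF j zU y] by (rule onorm_inner_le)
  next
    show "l \<in> ball c r" using l by blast
    show "l' \<in> ball c r" using l by blast
  qed
  then show ?thesis by simp
qed

lemma f_lin_l:
  assumes V: "ball c r \<subseteq> U" and e: "\<epsilon> > 0"
  shows "\<exists>\<rho>>0. \<forall>l\<in>ball c r. \<forall>h. l + h \<in> ball c r \<longrightarrow> norm h < \<rho> \<longrightarrow>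
     (\<forall>j\<in>{1..m}. \<forall>y\<in>{a..b}. \<bar>f (l + h) j y - f l j y - Dl l j y \<bullet> h\<bar> \<le> \<epsilon> * norm h)"
proof -
  obtain \<rho> where \<rho>: "\<rho> > 0" and uc: "\<forall>j\<in>{1..m}. \<forall>l\<in>U. \<forall>l'\<in>U. \<forall>y\<in>{a..b}. \<forall>y'\<in>{a..b}.
      norm (l - l') < \<rho> \<longrightarrow> \<bar>y - y'\<bar> < \<rho> \<longrightarrow> norm (Dl l j y - Dl l' j y') \<le> \<epsilon>"
    using ucDl e by blast
  show ?thesis
  proof (intro exI[of _ \<rho>] conjI \<rho> ballI allI impI)
    fix l h j y assume l: "l \<in> ball c r" and lh: "l + h \<in> ball c r" and hn: "norm h < \<rho>"
      and j: "j \<in> {1..m}" and y: "y \<in> {a..b}"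
    define S where "S = ball c r \<inter> ball l \<rho>"
    have cS: "convex S" unfolding S_def by (intro convex_Int convex_ball)
    have lS: "l \<in> S" using l \<rho> by (simp add: S_def)
    have lhS: "l + h \<in> S" using lh hn by (simp add: S_def dist_norm)
    have segS: "l + t *\<^sub>R (l + h - l) \<in> S" if t: "t \<in> {0..1}" for t
    proof -
      have "(1 - t) *\<^sub>R l + t *\<^sub>R (l + h) \<in> S"
        using convexD_alt[OF cS lS lhS, of t] t by simp
      then show ?thesis by (simp add: algebra_simps)
    qed
    have lU: "l \<in> U" using l V by blast
    have derS: "((\<lambda>l. f l j y) has_derivative (\<lambda>h. Dl z j y \<bullet> h)) (at z within S)"
      if z: "z \<in> S" for z
    proof -
      have zU: "z \<in> U" using z V by (auto simp: S_def)
      show ?thesis using has_derivative_at_withinI[OF dl[OF j zU y]] .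
    qed
    have onS: "onorm ((\<lambda>h. Dl z j y \<bullet> h) - (\<lambda>h. Dl l j y \<bullet> h)) \<le> \<epsilon>"
      if z: "z \<in> S" for z
    proof -
      have zU: "z \<in> U" using z V by (auto simp: S_def)
      have zl: "norm (z - l) < \<rho>" using z by (simp add: S_def dist_norm norm_minus_commute)
      have "norm (Dl z j y - Dl l j y) \<le> \<epsilon>"
        using uc[rule_format, OF j zU lU y y] zl \<rho> by simp
      then have "onorm (\<lambda>h. (Dl z j y - Dl l j y) \<bullet> h) \<le> \<epsilon>" by (rule onorm_inner_le)
      then show ?thesis by (simp add: fun_diff_def inner_diff_left)
    qed
    have "norm ((\<lambda>l. f l j y) (l + h) - (\<lambda>l. f l j y) l - (\<lambda>h. Dl l j y \<bullet> h) (l + h - l))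
        \<le> norm (l + h - l) * \<epsilon>"
      by (rule differentiable_bound_linearization[where S=S and f'="\<lambda>z h. Dl z j y \<bullet> h", OF segS derS onS lS])
    then show "\<bar>f (l + h) j y - f l j y - Dl l j y \<bullet> h\<bar> \<le> \<epsilon> * norm h"
      by (simp add: mult.commute)
  qed
qed

lemma P_lip:
  assumes V: "ball c r \<subseteq> U" and l: "l \<in> ball c r" "l' \<in> ball c r" and w: "\<omega> \<in> symseq m"
  shows "\<bar>P l \<omega> - P l' \<omega>\<bar> \<le> Cb / (1 - g2) * norm (l - l')"
proof -
  have lU: "l \<in> U" "l' \<in> U" using l V by auto
  have "\<forall>w\<in>symseq m. \<bar>P l w - P l' w\<bar> \<le> Cb * norm (l - l') / (1 - g2)"
  proof (rule sup_trick[where s="sh 1" and B="b - a"])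
    show "\<forall>w\<in>symseq m. sh 1 w \<in> symseq m" using sh_sym by blast
    show "\<forall>w\<in>symseq m. \<bar>P l w - P l' w\<bar> \<le> b - a"
    proof
      fix w assume w: "w \<in> symseq m"
      have "P l w \<in> {a..b}" "P l' w \<in> {a..b}" using proj_X[OF lU(1) w] proj_X[OF lU(2) w] .
      then show "\<bar>P l w - P l' w\<bar> \<le> b - a" by auto
    qed
    show "\<forall>w\<in>symseq m. \<bar>P l w - P l' w\<bar> \<le> Cb * norm (l - l') + g2 * \<bar>P l (sh 1 w) - P l' (sh 1 w)\<bar>"
    proof
      fix w assume w: "w \<in> symseq m"
      have w1: "sh 1 w \<in> symseq m" using sh_sym[OF w] .
      define y where "y = P l (sh 1 w)"
      define y' where "y' = P l' (sh 1 w)"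
      have y: "y \<in> {a..b}" "y' \<in> {a..b}" using proj_X lU w1 by (auto simp: y_def y'_def)
      have "\<bar>P l w - P l' w\<bar> = \<bar>f l (w 0) y - f l' (w 0) y'\<bar>"
        using proj_rec[OF lU(1) w] proj_rec[OF lU(2) w] by (simp add: y_def y'_def)
      also have "\<dots> \<le> \<bar>f l (w 0) y - f l' (w 0) y\<bar> + \<bar>f l' (w 0) y - f l' (w 0) y'\<bar>"
        using abs_triangle_ineq[of "f l (w 0) y - f l' (w 0) y" "f l' (w 0) y - f l' (w 0) y'"] by simp
      also have "\<dots> \<le> Cb * norm (l - l') + g2 * \<bar>y - y'\<bar>"
        using f_lip_l[OF V l sym0[OF w] y(1)] f_lip_y[OF sym0[OF w] lU(2) y] by (rule add_mono)
      finally show "\<bar>P l w - P l' w\<bar> \<le> Cb * norm (l - l') + g2 * \<bar>P l (sh 1 w) - P l' (sh 1 w)\<bar>"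
        by (simp add: y_def y'_def)
    qed
  qed (use g2 in auto)
  then show ?thesis using w by (simp add: mult.commute)
qed

end



context ifs begin

lemma sh_sh0: "sh k (sh (Suc 0) \<omega>) = sh (Suc k) \<omega>" using sh_sh by simp
lemma sh_app0: "sh (Suc 0) \<omega> k = \<omega> (Suc k)" using sh_app by simp

definition Gt :: "real^'d \<Rightarrow> (nat \<Rightarrow> nat) \<Rightarrow> nat \<Rightarrow> real^'d" where
  "Gt l \<omega> k = (\<Prod>i<k. Dx l (\<omega> i) (P l (sh (Suc i) \<omega>))) *\<^sub>R Dl l (\<omega> k) (P l (sh (Suc k) \<omega>))"

definition G :: "real^'d \<Rightarrow> (nat \<Rightarrow> nat) \<Rightarrow> real^'d" where
  "G l \<omega> = suminf (Gt l \<omega>)"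

lemma Gt_bound:
  assumes l: "l \<in> U" and w: "\<omega> \<in> symseq m"
  shows "norm (Gt l \<omega> k) \<le> Cb * g2 ^ k"
proof -
  have "\<bar>\<Prod>i<k. Dx l (\<omega> i) (P l (sh (Suc i) \<omega>))\<bar> = (\<Prod>i<k. \<bar>Dx l (\<omega> i) (P l (sh (Suc i) \<omega>))\<bar>)"
    by (rule abs_prod)
  also have "\<dots> \<le> (\<Prod>i<k. g2)"
    by (rule prod_mono) (use bDx[OF sym0[OF w] l proj_X[OF l sh_sym[OF w]]] in auto)
  also have "\<dots> = g2 ^ k" by simp
  finally have p: "\<bar>\<Prod>i<k. Dx l (\<omega> i) (P l (sh (Suc i) \<omega>))\<bar> \<le> g2 ^ k" .
  have d: "norm (Dl l (\<omega> k) (P l (sh (Suc k) \<omega>))) \<le> Cb"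
    by (rule bDl[OF sym0[OF w] l proj_X[OF l sh_sym[OF w]]])
  have "norm (Gt l \<omega> k) = \<bar>\<Prod>i<k. Dx l (\<omega> i) (P l (sh (Suc i) \<omega>))\<bar> * norm (Dl l (\<omega> k) (P l (sh (Suc k) \<omega>)))"
    by (simp add: Gt_def)
  also have "\<dots> \<le> g2 ^ k * Cb" using p d by (intro mult_mono) auto
  finally show ?thesis by (simp add: mult.commute)
qed

lemma Gt_summable_norm:
  assumes l: "l \<in> U" and w: "\<omega> \<in> symseq m"
  shows "summable (\<lambda>k. norm (Gt l \<omega> k))"
proof (rule summable_comparison_test'[where N=0])
  show "summable (\<lambda>k. Cb * g2 ^ k)" using g2 by (intro summable_mult summable_geometric) auto
  show "norm (norm (Gt l \<omega> k)) \<le> Cb * g2 ^ k" for k using Gt_bound[OF l w] by simp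
qed

lemma Gt_summable:
  assumes l: "l \<in> U" and w: "\<omega> \<in> symseq m"
  shows "summable (Gt l \<omega>)"
  using Gt_summable_norm[OF l w] by (rule summable_norm_cancel)

lemma G_bound:
  assumes l: "l \<in> U" and w: "\<omega> \<in> symseq m"
  shows "norm (G l \<omega>) \<le> Cb / (1 - g2)"
proof -
  have sg: "summable (\<lambda>k. Cb * g2 ^ k)" using g2 by (intro summable_mult summable_geometric) auto
  have "norm (G l \<omega>) \<le> (\<Sum>k. norm (Gt l \<omega> k))"
    unfolding G_def by (rule summable_norm[OF Gt_summable_norm[OF l w]])
  also have "\<dots> \<le> (\<Sum>k. Cb * g2 ^ k)"
    by (rule suminf_le[OF _ Gt_summable_norm[OF l w] sg]) (rule Gt_bound[OF l w])
  also have "\<dots> = Cb * (1 / (1 - g2))"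
    using g2 by (simp add: suminf_mult summable_geometric suminf_geometric)
  finally show ?thesis by simp
qed

lemma Gt_Suc:
  "Gt l \<omega> (Suc k) = Dx l (\<omega> 0) (P l (sh 1 \<omega>)) *\<^sub>R Gt l (sh 1 \<omega>) k"
proof -
  have p1: "(\<Prod>i<Suc k. Dx l (\<omega> i) (P l (sh (Suc i) \<omega>)))
      = Dx l (\<omega> 0) (P l (sh 1 \<omega>)) * (\<Prod>i<k. Dx l (\<omega> (Suc i)) (P l (sh (Suc (Suc i)) \<omega>)))"
    by (subst prod.lessThan_Suc_shift) simp
  have p2: "(\<Prod>i<k. Dx l (\<omega> (Suc i)) (P l (sh (Suc (Suc i)) \<omega>)))
      = (\<Prod>i<k. Dx l (sh 1 \<omega> i) (P l (sh (Suc i) (sh 1 \<omega>))))"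
    by (simp add: sh_sh sh_app sh_sh0 sh_app0)
  have e1: "Gt l \<omega> (Suc k) = (\<Prod>i<Suc k. Dx l (\<omega> i) (P l (sh (Suc i) \<omega>))) *\<^sub>R Dl l (\<omega> (Suc k)) (P l (sh (Suc (Suc k)) \<omega>))"
    by (simp only: Gt_def)
  have e2: "Gt l (sh 1 \<omega>) k = (\<Prod>i<k. Dx l (sh 1 \<omega> i) (P l (sh (Suc i) (sh 1 \<omega>)))) *\<^sub>R Dl l (sh 1 \<omega> k) (P l (sh (Suc k) (sh 1 \<omega>)))"
    by (simp only: Gt_def)
  show ?thesis by (simp only: e1 e2 p1 sh_app sh_sh scaleR_scaleR)
qed

lemma G_rec:
  assumes l: "l \<in> U" and w: "\<omega> \<in> symseq m"
  shows "G l \<omega> = Dl l (\<omega> 0) (P l (sh 1 \<omega>)) + Dx l (\<omega> 0) (P l (sh 1 \<omega>)) *\<^sub>R G l (sh 1 \<omega>)"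
proof -
  have s: "summable (Gt l \<omega>)" by (rule Gt_summable[OF l w])
  have s1: "summable (Gt l (sh 1 \<omega>))" by (rule Gt_summable[OF l sh_sym[OF w]])
  have "G l \<omega> = Gt l \<omega> 0 + (\<Sum>k. Gt l \<omega> (Suc k))"
    unfolding G_def using suminf_split_head[OF s] by simp
  also have "(\<Sum>k. Gt l \<omega> (Suc k)) = (\<Sum>k. Dx l (\<omega> 0) (P l (sh 1 \<omega>)) *\<^sub>R Gt l (sh 1 \<omega>) k)"
    by (simp add: Gt_Suc)
  also have "\<dots> = Dx l (\<omega> 0) (P l (sh 1 \<omega>)) *\<^sub>R G l (sh 1 \<omega>)"
    unfolding G_def using suminf_scaleR_right[OF s1] by simp
  finally show ?thesis by (simp add: Gt_def)
qed

end



context ifs begin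

lemma G_cont:
  assumes V: "ball c r \<subseteq> U" and l0: "l0 \<in> ball c r" and e: "e > 0"
  shows "\<exists>\<rho>>0. \<forall>l\<in>ball c r. norm (l - l0) < \<rho> \<longrightarrow>
           (\<forall>\<omega>\<in>symseq m. norm (G l \<omega> - G l0 \<omega>) \<le> e)"
proof -
  define L where "L = Cb / (1 - g2)"
  have L0: "0 \<le> L" using Cb g2 by (simp add: L_def)
  define e1 where "e1 = e * (1 - g2) / 2"
  define e2 where "e2 = e * (1 - g2) / (2 * (L + 1))"
  have e1: "e1 > 0" using e g2 by (simp add: e1_def)
  have e2: "e2 > 0" using e g2 L0 by (simp add: e2_def)
  obtain r1 where r1: "r1 > 0" and uc1: "\<forall>j\<in>{1..m}. \<forall>l\<in>U. \<forall>l'\<in>U. \<forall>y\<in>{a..b}. \<forall>y'\<in>{a..b}.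
      norm (l - l') < r1 \<longrightarrow> \<bar>y - y'\<bar> < r1 \<longrightarrow> norm (Dl l j y - Dl l' j y') \<le> e1"
    using ucDl e1 by blast
  obtain r2 where r2: "r2 > 0" and uc2: "\<forall>j\<in>{1..m}. \<forall>l\<in>U. \<forall>l'\<in>U. \<forall>y\<in>{a..b}. \<forall>y'\<in>{a..b}.
      norm (l - l') < r2 \<longrightarrow> \<bar>y - y'\<bar> < r2 \<longrightarrow> norm (Dx l j y - Dx l' j y') \<le> e2"
    using ucDx e2 by blast
  define \<rho> where "\<rho> = min r1 r2 / (L + 1)"
  have \<rho>: "\<rho> > 0" using r1 r2 L0 by (simp add: \<rho>_def)
  have \<rho>1: "\<rho> \<le> min r1 r2"
  proof -
    have "min r1 r2 / (L + 1) \<le> min r1 r2 / 1"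
      by (rule divide_left_mono) (use r1 r2 L0 in auto)
    then show ?thesis by (simp add: \<rho>_def)
  qed
  have \<rho>2: "L * \<rho> < min r1 r2"
  proof -
    have m0: "0 < min r1 r2" using r1 r2 by simp
    have "L * min r1 r2 < min r1 r2 * (L + 1)" using m0 by (simp add: algebra_simps)
    moreover have pos: "0 < L + 1" using L0 by simp
    ultimately have "L * min r1 r2 / (L + 1) < min r1 r2"
      using iffD2[OF pos_divide_less_eq[OF pos]] by blast
    then show ?thesis by (simp add: \<rho>_def)
  qed
  show ?thesis
  proof (intro exI[of _ \<rho>] conjI \<rho> ballI impI)
    fix l \<omega> assume l: "l \<in> ball c r" and ll: "norm (l - l0) < \<rho>" and w\<omega>: "\<omega> \<in> symseq m"
    have lU: "l \<in> U" "l0 \<in> U" using l l0 V by auto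
    have Ly: "L * norm (l - l0) < min r1 r2"
      using mult_left_mono[OF less_imp_le[OF ll] L0] \<rho>2 by linarith
    have "\<forall>w\<in>symseq m. norm (G l w - G l0 w) \<le> (e1 + e2 * L) / (1 - g2)"
    proof (rule sup_trick[where s="sh 1" and B="2 * L"])
      show "\<forall>w\<in>symseq m. sh 1 w \<in> symseq m" using sh_sym by blast
      show "\<forall>w\<in>symseq m. norm (G l w - G l0 w) \<le> 2 * L"
      proof
        fix w assume w: "w \<in> symseq m"
        have "norm (G l w - G l0 w) \<le> norm (G l w) + norm (G l0 w)" by (rule norm_triangle_ineq4)
        also have "\<dots> \<le> L + L" using G_bound[OF lU(1) w] G_bound[OF lU(2) w] by (simp add: L_def)
        finally show "norm (G l w - G l0 w) \<le> 2 * L" by simp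
      qed
      show "\<forall>w\<in>symseq m. norm (G l w - G l0 w) \<le> e1 + e2 * L + g2 * norm (G l (sh 1 w) - G l0 (sh 1 w))"
      proof
        fix w assume w: "w \<in> symseq m"
        have w1: "sh 1 w \<in> symseq m" by (rule sh_sym[OF w])
        have j: "w 0 \<in> {1..m}" by (rule sym0[OF w])
        define y where "y = P l (sh 1 w)"
        define y0 where "y0 = P l0 (sh 1 w)"
        have y: "y \<in> {a..b}" "y0 \<in> {a..b}" unfolding y_def y0_def using proj_X lU w1 by auto
        have yy: "\<bar>y - y0\<bar> \<le> L * norm (l - l0)"
          unfolding y_def y0_def L_def by (rule P_lip[OF V l l0 w1])
        have d1: "norm (Dl l (w 0) y - Dl l0 (w 0) y0) \<le> e1"
          using uc1[rule_format, OF j lU y] ll \<rho>1 yy Ly by auto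
        have d2: "\<bar>Dx l (w 0) y - Dx l0 (w 0) y0\<bar> \<le> e2"
          using uc2[rule_format, OF j lU y] ll \<rho>1 yy Ly by auto
        have gb: "norm (G l (sh 1 w)) \<le> L" using G_bound[OF lU(1) w1] by (simp add: L_def)
        have bx: "\<bar>Dx l0 (w 0) y0\<bar> \<le> g2" by (rule bDx[OF j lU(2) y(2)])
        define A where "A = Dl l (w 0) y - Dl l0 (w 0) y0"
        define B where "B = (Dx l (w 0) y - Dx l0 (w 0) y0) *\<^sub>R G l (sh 1 w)"
        define C where "C = Dx l0 (w 0) y0 *\<^sub>R (G l (sh 1 w) - G l0 (sh 1 w))"
        have eq: "G l w - G l0 w = A + B + C"
          using G_rec[OF lU(1) w] G_rec[OF lU(2) w] unfolding y_def y0_def A_def B_def C_def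
          by (simp add: algebra_simps)
        have t1: "norm (A + B + C) \<le> norm (A + B) + norm C" by (rule norm_triangle_ineq)
        have t2: "norm (A + B) \<le> norm A + norm B" by (rule norm_triangle_ineq)
        have nA: "norm A \<le> e1" using d1 by (simp add: A_def)
        have nB: "norm B \<le> e2 * L"
          unfolding B_def using mult_mono[OF d2 gb] e2 by simp
        have nC: "norm C \<le> g2 * norm (G l (sh 1 w) - G l0 (sh 1 w))"
          unfolding C_def using mult_right_mono[OF bx norm_ge_zero] by simp
        show "norm (G l w - G l0 w) \<le> e1 + e2 * L + g2 * norm (G l (sh 1 w) - G l0 (sh 1 w))"
          unfolding eq using t1 t2 nA nB nC by linarith
      qed
    qed (use g2 in auto)
    moreover have "(e1 + e2 * L) / (1 - g2) \<le> e"
    proof -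
      have "e2 * L \<le> e * (1 - g2) / 2"
        unfolding e2_def using e g2 L0 by (simp add: field_simps)
      then have "e1 + e2 * L \<le> e * (1 - g2)" by (simp add: e1_def)
      then show ?thesis using g2 by (simp add: divide_le_eq)
    qed
    ultimately show "norm (G l \<omega> - G l0 \<omega>) \<le> e" using w\<omega> by force
  qed
qed

end



context ifs begin

lemma f_lin_y:
  assumes j: "j \<in> {1..m}" and l': "l' \<in> U" and y: "y \<in> {a..b}" "y' \<in> {a..b}"
    and bd: "\<And>z. z \<in> {min y y'..max y y'} \<Longrightarrow> \<bar>Dx l' j z - D\<bar> \<le> \<epsilon>"
  shows "\<bar>f l' j y' - f l' j y - D * (y' - y)\<bar> \<le> \<epsilon> * \<bar>y' - y\<bar>"
proof -
  define S where "S = {min y y'..max y y'}"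
  have SX: "S \<subseteq> {a..b}" using y by (auto simp: S_def)
  have "norm ((\<lambda>z. f l' j z - D * z) y' - (\<lambda>z. f l' j z - D * z) y) \<le> \<epsilon> * norm (y' - y)"
  proof (rule field_differentiable_bound[of S _ "\<lambda>z. Dx l' j z - D"])
    show "convex S" unfolding S_def by (rule convex_real_interval)
    fix z assume z: "z \<in> S"
    have zX: "z \<in> {a..b}" using z SX by blast
    have d: "(f l' j has_field_derivative Dx l' j z) (at z within S)"
      using DERIV_subset[OF dx[OF j l' zX] SX] by simp
    show "((\<lambda>z. f l' j z - D * z) has_field_derivative Dx l' j z - D) (at z within S)"
      using d by (auto intro!: derivative_eq_intros)
    show "norm (Dx l' j z - D) \<le> \<epsilon>" using bd z by (simp add: S_def)
  next
    show "y' \<in> S" "y \<in> S" by (auto simp: S_def)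
  qed
  then show ?thesis by (simp add: algebra_simps)
qed

lemma P_deriv:
  assumes V: "ball c r \<subseteq> U" and l: "l \<in> ball c r" and w: "\<omega> \<in> symseq m"
  shows "((\<lambda>l'. P l' \<omega>) has_derivative (\<lambda>h. G l \<omega> \<bullet> h)) (at l)"
  unfolding has_derivative_at_alt
proof (intro conjI allI impI)
  show "bounded_linear (\<lambda>h. G l \<omega> \<bullet> h)" by (rule bounded_linear_inner_right)
  fix e :: real assume e: "e > 0"
  define L where "L = Cb / (1 - g2)"
  have L0: "0 \<le> L" using Cb g2 by (simp add: L_def)
  define e1 where "e1 = e * (1 - g2) / 2"
  define e2 where "e2 = e * (1 - g2) / (2 * (L + 1))"
  have e1: "e1 > 0" using e g2 by (simp add: e1_def)
  have e2: "e2 > 0" using e g2 L0 by (simp add: e2_def)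
  obtain r1 where r1: "r1 > 0" and lin: "\<forall>l\<in>ball c r. \<forall>h. l + h \<in> ball c r \<longrightarrow> norm h < r1 \<longrightarrow>
     (\<forall>j\<in>{1..m}. \<forall>y\<in>{a..b}. \<bar>f (l + h) j y - f l j y - Dl l j y \<bullet> h\<bar> \<le> e1 * norm h)"
    using f_lin_l[OF V e1] by blast
  obtain r2 where r2: "r2 > 0" and uc2: "\<forall>j\<in>{1..m}. \<forall>l\<in>U. \<forall>l'\<in>U. \<forall>y\<in>{a..b}. \<forall>y'\<in>{a..b}.
      norm (l - l') < r2 \<longrightarrow> \<bar>y - y'\<bar> < r2 \<longrightarrow> norm (Dx l j y - Dx l' j y') \<le> e2"
    using ucDx e2 by blast
  define d where "d = min (r - dist c l) (min r1 (r2 / (L + 1)))"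
  have dpos: "d > 0" using l r1 r2 L0 by (simp add: d_def)
  show "\<exists>d>0. \<forall>y. norm (y - l) < d \<longrightarrow> norm (P y \<omega> - P l \<omega> - G l \<omega> \<bullet> (y - l)) \<le> e * norm (y - l)"
  proof (intro exI[of _ d] conjI dpos allI impI)
    fix l1 assume hl: "norm (l1 - l) < d"
    define h where "h = l1 - l"
    have l1: "l1 = l + h" by (simp add: h_def)
    have hn: "norm h < d" using hl by (simp add: h_def)
    have lh: "l + h \<in> ball c r"
    proof -
      have "dist c (l + h) \<le> dist c l + norm h" unfolding dist_norm by (metis diff_diff_eq norm_triangle_ineq4)
      also have "\<dots> < dist c l + (r - dist c l)" using hn by (simp add: d_def)
      finally show ?thesis by simp
    qed
    have lU: "l \<in> U" "l + h \<in> U" using l lh V by auto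
    have hr1: "norm h < r1" using hn by (simp add: d_def)
    have hr2: "norm h < r2" and Lh: "L * norm h < r2"
    proof -
      have a1: "norm h < r2 / (L + 1)" using hn by (simp add: d_def)
      have pos: "0 < L + 1" using L0 by simp
      have "norm h * (L + 1) < r2" using a1 pos by (simp add: pos_less_divide_eq)
      then have x: "norm h + L * norm h < r2" by (simp add: algebra_simps)
      have "0 \<le> L * norm h" using L0 by simp
      then show "norm h < r2" "L * norm h < r2" using x norm_ge_zero[of h] by linarith+
    qed
    have "\<forall>w\<in>symseq m. \<bar>P (l + h) w - P l w - G l w \<bullet> h\<bar> \<le> (e1 * norm h + e2 * (L * norm h)) / (1 - g2)"
    proof (rule sup_trick[where s="sh 1" and B="(b - a) + L * norm h"])
      show "\<forall>w\<in>symseq m. sh 1 w \<in> symseq m" using sh_sym by blast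
      show "\<forall>w\<in>symseq m. \<bar>P (l + h) w - P l w - G l w \<bullet> h\<bar> \<le> (b - a) + L * norm h"
      proof
        fix w assume w: "w \<in> symseq m"
        have "P (l + h) w \<in> {a..b}" "P l w \<in> {a..b}" using proj_X[OF lU(2) w] proj_X[OF lU(1) w] .
        then have p: "\<bar>P (l + h) w - P l w\<bar> \<le> b - a" by auto
        have "\<bar>G l w \<bullet> h\<bar> \<le> norm (G l w) * norm h" by (rule Cauchy_Schwarz_ineq2)
        also have "\<dots> \<le> L * norm h" using G_bound[OF lU(1) w] by (intro mult_right_mono) (auto simp: L_def)
        finally show "\<bar>P (l + h) w - P l w - G l w \<bullet> h\<bar> \<le> (b - a) + L * norm h" using p by linarith
      qed
      show "\<forall>w\<in>symseq m. \<bar>P (l + h) w - P l w - G l w \<bullet> h\<bar>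
          \<le> e1 * norm h + e2 * (L * norm h) + g2 * \<bar>P (l + h) (sh 1 w) - P l (sh 1 w) - G l (sh 1 w) \<bullet> h\<bar>"
      proof
        fix w assume w: "w \<in> symseq m"
        have w1: "sh 1 w \<in> symseq m" by (rule sh_sym[OF w])
        have j: "w 0 \<in> {1..m}" by (rule sym0[OF w])
        define y where "y = P l (sh 1 w)"
        define y' where "y' = P (l + h) (sh 1 w)"
        have y: "y \<in> {a..b}" "y' \<in> {a..b}" unfolding y_def y'_def using proj_X lU w1 by auto
        have yy: "\<bar>y' - y\<bar> \<le> L * norm h"
          using P_lip[OF V lh l w1] unfolding y_def y'_def L_def by simp
        define A where "A = f (l + h) (w 0) y' - f (l + h) (w 0) y - Dx l (w 0) y * (y' - y)"
        define B where "B = f (l + h) (w 0) y - f l (w 0) y - Dl l (w 0) y \<bullet> h"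
        define C where "C = Dx l (w 0) y * (y' - y - G l (sh 1 w) \<bullet> h)"
        have eq: "P (l + h) w - P l w - G l w \<bullet> h = A + B + C"
          using proj_rec[OF lU(2) w] proj_rec[OF lU(1) w] G_rec[OF lU(1) w]
          unfolding A_def B_def C_def y_def y'_def
          by (simp add: algebra_simps inner_add_left)
        have nB: "\<bar>B\<bar> \<le> e1 * norm h" unfolding B_def using lin l lh hr1 j y(1) by blast
        have nA: "\<bar>A\<bar> \<le> e2 * \<bar>y' - y\<bar>" unfolding A_def
        proof (rule f_lin_y[OF j lU(2) y(1) y(2)])
          fix z assume z: "z \<in> {min y y'..max y y'}"
          have zX: "z \<in> {a..b}" using z y by auto
          have "\<bar>z - y\<bar> \<le> \<bar>y' - y\<bar>" using z by auto
          then have zy: "\<bar>z - y\<bar> < r2" using yy Lh by linarith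
          have "norm (l + h - l) < r2" using hr2 by simp
          then show "\<bar>Dx (l + h) (w 0) z - Dx l (w 0) y\<bar> \<le> e2"
            using uc2[rule_format, OF j lU(2) lU(1) zX y(1)] zy by simp
        qed
        have nA': "\<bar>A\<bar> \<le> e2 * (L * norm h)"
          using nA mult_left_mono[OF yy less_imp_le[OF e2]] by linarith
        have nC: "\<bar>C\<bar> \<le> g2 * \<bar>P (l + h) (sh 1 w) - P l (sh 1 w) - G l (sh 1 w) \<bullet> h\<bar>"
          unfolding C_def y_def y'_def abs_mult using bDx[OF j lU(1) y(1)] unfolding y_def
          by (intro mult_right_mono) auto
        show "\<bar>P (l + h) w - P l w - G l w \<bullet> h\<bar>
          \<le> e1 * norm h + e2 * (L * norm h) + g2 * \<bar>P (l + h) (sh 1 w) - P l (sh 1 w) - G l (sh 1 w) \<bullet> h\<bar>"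
          unfolding eq using nA' nB nC by linarith
      qed
    qed (use g2 in auto)
    moreover have "(e1 * norm h + e2 * (L * norm h)) / (1 - g2) \<le> e * norm h"
    proof -
      have "e2 * L \<le> e * (1 - g2) / 2"
        unfolding e2_def using e g2 L0 by (simp add: field_simps)
      then have "e1 + e2 * L \<le> e * (1 - g2)" by (simp add: e1_def)
      then have "(e1 + e2 * L) * norm h \<le> e * (1 - g2) * norm h" by (rule mult_right_mono) simp
      then have "e1 * norm h + e2 * (L * norm h) \<le> e * norm h * (1 - g2)" by (simp add: algebra_simps)
      then show ?thesis using g2 by (simp add: divide_le_eq)
    qed
    ultimately show "norm (P l1 \<omega> - P l \<omega> - G l \<omega> \<bullet> (l1 - l)) \<le> e * norm (l1 - l)"
      using w unfolding l1 by force
  qed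
qed

end



lemma main_core:
  fixes f :: "real^'d \<Rightarrow> nat \<Rightarrow> real \<Rightarrow> real"
  assumes I: "ifs f Dx Dl U a b g2 Cb x m"
    and MT: "MT {a..b} U m f \<eta>"
  shows "\<forall>l0\<in>U. \<exists>r0>0. ball l0 r0 \<subseteq> U \<and>
     (\<forall>\<omega>\<in>symseq m. \<forall>\<tau>\<in>symseq m. \<omega> 0 \<noteq> \<tau> 0 \<longrightarrow>
       (\<exists>e::real^'d. norm e = 1 \<and>
         (\<forall>p\<in>ball 0 r0. p \<bullet> e = 0 \<longrightarrow>
           (\<forall>t. p + t *\<^sub>R e \<in> ball 0 r0 \<longrightarrow>
              \<bar>proj f x (l0 + p + t *\<^sub>R e) \<omega> - proj f x (l0 + p + t *\<^sub>R e) \<tau>\<bar> < \<eta> / 2 \<longrightarrow>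
              (\<exists>D. ((\<lambda>s. proj f x (l0 + p + s *\<^sub>R e) \<omega> - proj f x (l0 + p + s *\<^sub>R e) \<tau>)
                       has_real_derivative D) (at t) \<and> \<eta> / 2 \<le> \<bar>D\<bar>)))))"
proof
  interpret ifs f Dx Dl U a b g2 Cb x m by (rule I)
  have eta: "\<eta> > 0" using MT by (simp add: MT_def)
  fix l0 assume l0: "l0 \<in> U"
  obtain r1 where r1: "r1 > 0" and V: "ball l0 r1 \<subseteq> U" using openU l0 open_contains_ball by blast
  have l0b: "l0 \<in> ball l0 r1" using r1 by simp
  define L where "L = Cb / (1 - g2)"
  have L0: "0 \<le> L" using Cb g2 by (simp add: L_def)
  obtain \<rho> where \<rho>: "\<rho> > 0" and Gc: "\<forall>l\<in>ball l0 r1. norm (l - l0) < \<rho> \<longrightarrow>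
           (\<forall>\<omega>\<in>symseq m. norm (G l \<omega> - G l0 \<omega>) \<le> \<eta> / 4)"
    using G_cont[OF V l0b, of "\<eta> / 4"] eta by auto
  define r0 where "r0 = min r1 (min \<rho> (\<eta> / (4 * (L + 1))))"
  have r0: "r0 > 0" using r1 \<rho> eta L0 by (simp add: r0_def)
  have r0r1: "r0 \<le> r1" and r0\<rho>: "r0 \<le> \<rho>" by (simp_all add: r0_def)
  have r0L: "2 * L * r0 < \<eta> / 2"
  proof -
    have "r0 \<le> \<eta> / (4 * (L + 1))" by (simp add: r0_def)
    then have "r0 * (4 * (L + 1)) \<le> \<eta>" using L0 by (simp add: le_divide_eq)
    then have "4 * L * r0 + 4 * r0 \<le> \<eta>" by (simp add: algebra_simps)
    then show ?thesis using r0 by linarith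
  qed
  show "\<exists>r0>0. ball l0 r0 \<subseteq> U \<and>
     (\<forall>\<omega>\<in>symseq m. \<forall>\<tau>\<in>symseq m. \<omega> 0 \<noteq> \<tau> 0 \<longrightarrow>
       (\<exists>e::real^'d. norm e = 1 \<and>
         (\<forall>p\<in>ball 0 r0. p \<bullet> e = 0 \<longrightarrow>
           (\<forall>t. p + t *\<^sub>R e \<in> ball 0 r0 \<longrightarrow>
              \<bar>proj f x (l0 + p + t *\<^sub>R e) \<omega> - proj f x (l0 + p + t *\<^sub>R e) \<tau>\<bar> < \<eta> / 2 \<longrightarrow>
              (\<exists>D. ((\<lambda>s. proj f x (l0 + p + s *\<^sub>R e) \<omega> - proj f x (l0 + p + s *\<^sub>R e) \<tau>)
                       has_real_derivative D) (at t) \<and> \<eta> / 2 \<le> \<bar>D\<bar>)))))"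
  proof (intro exI[of _ r0] conjI r0 ballI impI)
    show "ball l0 r0 \<subseteq> U" using V r0r1 by auto
    fix \<omega> \<tau> assume w: "\<omega> \<in> symseq m" and t: "\<tau> \<in> symseq m" and ne: "\<omega> 0 \<noteq> \<tau> 0"
    have inball: "l0 + v \<in> ball l0 r1" "norm (l0 + v - l0) < \<rho>" if "v \<in> ball 0 r0" for v
      using that r0r1 r0\<rho> by (auto simp: dist_norm)
    have lip: "\<bar>(P l \<omega> - P l \<tau>) - (P l0 \<omega> - P l0 \<tau>)\<bar> \<le> 2 * L * norm (l - l0)"
      if l: "l \<in> ball l0 r1" for l
    proof -
      have a1: "\<bar>P l \<omega> - P l0 \<omega>\<bar> \<le> L * norm (l - l0)" using P_lip[OF V l l0b w] by (simp add: L_def)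
      have a2: "\<bar>P l \<tau> - P l0 \<tau>\<bar> \<le> L * norm (l - l0)" using P_lip[OF V l l0b t] by (simp add: L_def)
      show ?thesis using a1 a2 by linarith
    qed
    show "\<exists>e::real^'d. norm e = 1 \<and>
         (\<forall>p\<in>ball 0 r0. p \<bullet> e = 0 \<longrightarrow>
           (\<forall>t. p + t *\<^sub>R e \<in> ball 0 r0 \<longrightarrow>
              \<bar>proj f x (l0 + p + t *\<^sub>R e) \<omega> - proj f x (l0 + p + t *\<^sub>R e) \<tau>\<bar> < \<eta> / 2 \<longrightarrow>
              (\<exists>D. ((\<lambda>s. proj f x (l0 + p + s *\<^sub>R e) \<omega> - proj f x (l0 + p + s *\<^sub>R e) \<tau>)
                       has_real_derivative D) (at t) \<and> \<eta> / 2 \<le> \<bar>D\<bar>)))"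
    proof (cases "\<bar>P l0 \<omega> - P l0 \<tau>\<bar> < \<eta>")
      case False
      show ?thesis
      proof (intro exI[of _ "axis undefined (1::real)"] conjI ballI impI allI)
        show "norm (axis undefined (1::real) :: real^'d) = 1" by simp
        fix p and s :: real assume pb: "p + s *\<^sub>R axis undefined 1 \<in> ball 0 r0"
          and small: "\<bar>P (l0 + p + s *\<^sub>R axis undefined 1) \<omega> - P (l0 + p + s *\<^sub>R axis undefined 1) \<tau>\<bar> < \<eta> / 2"
        define l where "l = l0 + (p + s *\<^sub>R axis undefined 1)"
        have lb: "l \<in> ball l0 r1" using inball(1)[OF pb] by (simp add: l_def)
        have nl: "norm (l - l0) < r0" using pb by (simp add: l_def)
        have "2 * L * norm (l - l0) \<le> 2 * L * r0" using nl L0 by (intro mult_left_mono) auto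
        then have "\<bar>(P l \<omega> - P l \<tau>) - (P l0 \<omega> - P l0 \<tau>)\<bar> < \<eta> / 2" using lip[OF lb] r0L by linarith
        moreover have "\<bar>P l \<omega> - P l \<tau>\<bar> < \<eta> / 2" using small by (simp add: l_def add.assoc)
        ultimately show "\<exists>D. ((\<lambda>s'. P (l0 + p + s' *\<^sub>R axis undefined 1) \<omega> - P (l0 + p + s' *\<^sub>R axis undefined 1) \<tau>)
                       has_real_derivative D) (at s) \<and> \<eta> / 2 \<le> \<bar>D\<bar>"
          using False by linarith
      qed
    next
      case True
      define g0 where "g0 = G l0 \<omega> - G l0 \<tau>"
      have der0: "((\<lambda>l'. P l' \<omega> - P l' \<tau>) has_derivative (\<lambda>h. g0 \<bullet> h)) (at l0)"
        using has_derivative_diff[OF P_deriv[OF V l0b w] P_deriv[OF V l0b t]]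
        by (simp add: g0_def inner_diff_left)
      have l0c: "l0 \<in> closure U" using l0 closure_subset by blast
      have g0n: "\<eta> \<le> norm g0"
        using MT l0c w t xX ne True der0 unfolding MT_def by blast
      have g0p: "norm g0 > 0" using g0n eta by linarith
      define e where "e = (1 / norm g0) *\<^sub>R g0"
      have ne1: "norm e = 1" using g0p by (simp add: e_def)
      have g0e: "g0 \<bullet> e = norm g0" using g0p by (simp add: e_def power2_norm_eq_inner[symmetric] power2_eq_square)
      show ?thesis
      proof (intro exI[of _ e] conjI ne1 ballI impI allI)
        fix p and s :: real assume pb: "p + s *\<^sub>R e \<in> ball 0 r0"
        define l where "l = l0 + (p + s *\<^sub>R e)"
        have lb: "l \<in> ball l0 r1" using inball(1)[OF pb] by (simp add: l_def)
        have lr: "norm (l - l0) < \<rho>" using inball(2)[OF pb] by (simp add: l_def)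
        define g where "g = G l \<omega> - G l \<tau>"
        have derl: "((\<lambda>l'. P l' \<omega> - P l' \<tau>) has_derivative (\<lambda>h. g \<bullet> h)) (at l)"
          using has_derivative_diff[OF P_deriv[OF V lb w] P_deriv[OF V lb t]]
          by (simp add: g_def inner_diff_left)
        have lin: "((\<lambda>s'. l0 + p + s' *\<^sub>R e) has_derivative (\<lambda>s'. s' *\<^sub>R e)) (at s)"
          by (auto intro!: derivative_eq_intros)
        have ls: "l0 + p + s *\<^sub>R e = l" by (simp add: l_def add.assoc)
        have comp: "((\<lambda>s'. P (l0 + p + s' *\<^sub>R e) \<omega> - P (l0 + p + s' *\<^sub>R e) \<tau>) has_derivative
              (\<lambda>s'. g \<bullet> (s' *\<^sub>R e))) (at s)"
          using diff_chain_at[OF lin, of "\<lambda>l'. P l' \<omega> - P l' \<tau>" "\<lambda>h. g \<bullet> h"] derl ls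
          by (simp add: o_def)
        have "(\<lambda>s'. g \<bullet> (s' *\<^sub>R e)) = (*) (g \<bullet> e)" by (rule ext) simp
        then have dd: "((\<lambda>s'. P (l0 + p + s' *\<^sub>R e) \<omega> - P (l0 + p + s' *\<^sub>R e) \<tau>) has_real_derivative (g \<bullet> e)) (at s)"
          using comp by (simp add: has_field_derivative_def)
        have gg: "norm (g - g0) \<le> \<eta> / 2"
        proof -
          have a1: "norm (G l \<omega> - G l0 \<omega>) \<le> \<eta> / 4" using Gc lb lr w by blast
          have a2: "norm (G l \<tau> - G l0 \<tau>) \<le> \<eta> / 4" using Gc lb lr t by blast
          have "g - g0 = (G l \<omega> - G l0 \<omega>) - (G l \<tau> - G l0 \<tau>)" by (simp add: g_def g0_def)
          then have "norm (g - g0) \<le> norm (G l \<omega> - G l0 \<omega>) + norm (G l \<tau> - G l0 \<tau>)"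
            by (metis norm_triangle_ineq4)
          then show ?thesis using a1 a2 by linarith
        qed
        have "\<bar>(g - g0) \<bullet> e\<bar> \<le> norm (g - g0) * norm e" by (rule Cauchy_Schwarz_ineq2)
        then have "\<bar>g \<bullet> e - g0 \<bullet> e\<bar> \<le> \<eta> / 2" using gg ne1 by (simp add: inner_diff_left)
        then have "\<eta> / 2 \<le> \<bar>g \<bullet> e\<bar>" using g0e g0n by linarith
        then show "\<exists>D. ((\<lambda>s'. P (l0 + p + s' *\<^sub>R e) \<omega> - P (l0 + p + s' *\<^sub>R e) \<tau>)
                       has_real_derivative D) (at s) \<and> \<eta> / 2 \<le> \<bar>D\<bar>"
          using dd by blast
      qed
    qed
  qed
qed



theorem mainTheorem11:
  fixes f :: "real^'d \<Rightarrow> nat \<Rightarrow> real \<Rightarrow> real"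
    and U :: "(real^'d) set" and a b \<delta> \<eta> :: real and m :: nat and x :: real
  assumes "a < b" and "x \<in> {a..b}"
    and "open U" and "bounded U"
    and "MA {a..b} U m \<delta> f"
    and "MT {a..b} U m f \<eta>"
  shows "\<forall>l0\<in>U. \<exists>r0>0. ball l0 r0 \<subseteq> U \<and>
     (\<forall>\<omega>\<in>symseq m. \<forall>\<tau>\<in>symseq m. \<omega> 0 \<noteq> \<tau> 0 \<longrightarrow>
       (\<exists>e::real^'d. norm e = 1 \<and>
         (\<forall>p\<in>ball 0 r0. p \<bullet> e = 0 \<longrightarrow>
           (\<forall>t. p + t *\<^sub>R e \<in> ball 0 r0 \<longrightarrow>
              \<bar>proj f x (l0 + p + t *\<^sub>R e) \<omega> - proj f x (l0 + p + t *\<^sub>R e) \<tau>\<bar> < \<eta> / 2 \<longrightarrow>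
              (\<exists>D. ((\<lambda>s. proj f x (l0 + p + s *\<^sub>R e) \<omega> - proj f x (l0 + p + s *\<^sub>R e) \<tau>)
                       has_real_derivative D) (at t) \<and> \<eta> / 2 \<le> \<bar>D\<bar>)))))"
proof -
  note ma = assms(5)[unfolded MA_def]
  have d0: "0 < \<delta>" using ma by blast
  have mp: "\<forall>j\<in>{1..m}. \<forall>l\<in>U. f l j ` {a..b} \<subseteq> {a..b}" using ma by blast
  obtain Dx Dxx Dl Dxl \<gamma>1 \<gamma>2 C where
    g: "0 < \<gamma>1" "\<gamma>1 \<le> \<gamma>2" "\<gamma>2 < 1" and
    D: "\<forall>j\<in>{1..m}. \<forall>l\<in>U. \<forall>y\<in>{a..b}.
          ((\<lambda>z. f l j z) has_real_derivative Dx l j y) (at y within {a..b}) \<and>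
          ((\<lambda>z. Dx l j z) has_real_derivative Dxx l j y) (at y within {a..b}) \<and>
          ((\<lambda>l'. f l' j y) has_derivative (\<lambda>h. Dl l j y \<bullet> h)) (at l) \<and>
          ((\<lambda>l'. Dx l' j y) has_derivative (\<lambda>h. Dxl l j y \<bullet> h)) (at l) \<and>
          \<gamma>1 \<le> \<bar>Dx l j y\<bar> \<and> \<bar>Dx l j y\<bar> \<le> \<gamma>2 \<and>
          \<bar>Dxx l j y\<bar> \<le> C \<and> norm (Dl l j y) \<le> C \<and> norm (Dxl l j y) \<le> C" and
    H: "\<forall>j\<in>{1..m}.
          holder_xl {a..b} U \<delta> (\<lambda>l x. Dx l j x) \<and>
          holder_xl {a..b} U \<delta> (\<lambda>l x. Dxx l j x) \<and>
          holder_xl {a..b} U \<delta> (\<lambda>l x. Dl l j x) \<and>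
          holder_xl {a..b} U \<delta> (\<lambda>l x. Dxl l j x)"
    using ma by blast
  have Hx: "\<forall>j\<in>{1..m}. holder_xl {a..b} U \<delta> ((\<lambda>j l y. Dx l j y) j)" using H by simp
  have Hl: "\<forall>j\<in>{1..m}. holder_xl {a..b} U \<delta> ((\<lambda>j l y. Dl l j y) j)" using H by simp
  have ucx: "\<forall>\<epsilon>>0. \<exists>r>0. \<forall>j\<in>{1..m}. \<forall>l\<in>U. \<forall>l'\<in>U. \<forall>y\<in>{a..b}. \<forall>y'\<in>{a..b}.
      norm (l - l') < r \<longrightarrow> \<bar>y - y'\<bar> < r \<longrightarrow> norm (Dx l j y - Dx l' j y') \<le> \<epsilon>"
    using holder_uc[OF finite_atLeastAtMost Hx d0] by simp
  have ucl: "\<forall>\<epsilon>>0. \<exists>r>0. \<forall>j\<in>{1..m}. \<forall>l\<in>U. \<forall>l'\<in>U. \<forall>y\<in>{a..b}. \<forall>y'\<in>{a..b}.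
      norm (l - l') < r \<longrightarrow> \<bar>y - y'\<bar> < r \<longrightarrow> norm (Dl l j y - Dl l' j y') \<le> \<epsilon>"
    using holder_uc[OF finite_atLeastAtMost Hl d0] by simp
  have I: "ifs f Dx Dl U a b \<gamma>2 (max C 0) x m"
  proof
    show "a \<le> b" using assms(1) by simp
    show "x \<in> {a..b}" by (rule assms(2))
    show "open U" by (rule assms(3))
    show "f l j y \<in> {a..b}" if "j \<in> {1..m}" "l \<in> U" "y \<in> {a..b}" for j l y
      using mp that by blast
    show "((\<lambda>z. f l j z) has_real_derivative Dx l j y) (at y within {a..b})"
      if "j \<in> {1..m}" "l \<in> U" "y \<in> {a..b}" for j l y using D that by blast
    show "((\<lambda>l'. f l' j y) has_derivative (\<lambda>h. Dl l j y \<bullet> h)) (at l)"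
      if "j \<in> {1..m}" "l \<in> U" "y \<in> {a..b}" for j l y using D that by blast
    show "0 \<le> \<gamma>2" "\<gamma>2 < 1" using g by auto
    show "0 \<le> max C 0" by simp
    show "\<bar>Dx l j y\<bar> \<le> \<gamma>2" if "j \<in> {1..m}" "l \<in> U" "y \<in> {a..b}" for j l y using D that by blast
    show "norm (Dl l j y) \<le> max C 0" if "j \<in> {1..m}" "l \<in> U" "y \<in> {a..b}" for j l y
    proof -
      have "norm (Dl l j y) \<le> C" using D that by blast
      then show ?thesis by simp
    qed
    show "\<forall>\<epsilon>>0. \<exists>r>0. \<forall>j\<in>{1..m}. \<forall>l\<in>U. \<forall>l'\<in>U. \<forall>y\<in>{a..b}. \<forall>y'\<in>{a..b}.
      norm (l - l') < r \<longrightarrow> \<bar>y - y'\<bar> < r \<longrightarrow> norm (Dx l j y - Dx l' j y') \<le> \<epsilon>" by (rule ucx)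
    show "\<forall>\<epsilon>>0. \<exists>r>0. \<forall>j\<in>{1..m}. \<forall>l\<in>U. \<forall>l'\<in>U. \<forall>y\<in>{a..b}. \<forall>y'\<in>{a..b}.
      norm (l - l') < r \<longrightarrow> \<bar>y - y'\<bar> < r \<longrightarrow> norm (Dl l j y - Dl l' j y') \<le> \<epsilon>" by (rule ucl)
  qed
  show ?thesis by (rule main_core[OF I assms(6)])
qed

end
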